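(* Let $\delta>2\epsilon>0$, $u=\frac1{\sqrt2}(-1,1)^\top$, $v=\frac1{\sqrt2}(1,1)^\top$, and let $Z_1,Z_2$ be i.i.d. Bernoulli$(1/2)$. Define $g_1=\frac\delta2u+\epsilon(2Z_1-1)v$, $g_2=\frac\delta2u+\epsilon(2Z_2-1)v$, $g_3=-\delta u$ in $\mathbb R^2$, all three clients honest. Then $\mathbb E\mu=\frac13(\mathbb Eg_1+\mathbb Eg_2+\mathbb Eg_3)=0$, $\mathbb E\|g_i-\mathbb Eg_i\|_2^2\le\epsilon^2$ and $\|\mathbb Eg_i-\mathbb E\mu\|_2\le\delta$ for $i=1,2,3$, and: (a) if $\hat\mu$ is the coordinate-wise median of $g_1,g_2,g_3$, then $\mathbb E\|\hat\mu-\mathbb E\mu\|_2^2>\frac{\delta^2}8+\frac{\epsilon^2}2$; (b) if $\hat\mu$ is the geometric median $\arg\min_x\sum_{i=1}^3\|x-g_i\|_2$, then $\mathbb E\|\hat\mu-\mathbb E\mu\|_2^2>\frac{\delta^2}8+\frac{\epsilon^2}2$; (c) if $\hat\mu$ is the Krum output, i.e. a $g_i$ minimizing $\min_{j\ne i}\|g_i-g_j\|_2^2$ (ties broken arbitrarily), then $\|\hat\mu-\mathbb E\mu\|_2^2=\epsilon^2+\frac{\delta^2}4$ always.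
   Context: This example has no Byzantine clients; it shows that these aggregation rules have gradient estimation error of order $\epsilon^2+\delta^2$ even without attack. *)

theory Defs
  imports "HOL-Probability.Probability"
begin

definition uvec :: "real^2" where
  "uvec = (\<chi> i. if i = 1 then - 1 / sqrt 2 else 1 / sqrt 2)"

definition vvec :: "real^2" where
  "vvec = (\<chi> i. if i = 1 then 1 / sqrt 2 else 1 / sqrt 2)"

text \<open>Law of (Z1, Z2): two independent Bernoulli(1/2) variables (True = 1).\<close>
definition Zpmf :: "(bool \<times> bool) pmf" where
  "Zpmf = pair_pmf (bernoulli_pmf (1/2)) (bernoulli_pmf (1/2))"

definition grad :: "real \<Rightarrow> real \<Rightarrow> nat \<Rightarrow> bool \<times> bool \<Rightarrow> real^2" where
  "grad \<delta> \<epsilon> i z =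
     (if i = 1 then (\<delta> / 2) *\<^sub>R uvec + (\<epsilon> * (2 * of_bool (fst z) - 1)) *\<^sub>R vvec
      else if i = 2 then (\<delta> / 2) *\<^sub>R uvec + (\<epsilon> * (2 * of_bool (snd z) - 1)) *\<^sub>R vvec
      else - (\<delta> *\<^sub>R uvec))"

definition med3 :: "real \<Rightarrow> real \<Rightarrow> real \<Rightarrow> real" where
  "med3 a b c = max (min a b) (min (max a b) c)"

definition cw_median3 :: "real^2 \<Rightarrow> real^2 \<Rightarrow> real^2 \<Rightarrow> real^2" where
  "cw_median3 x y z = (\<chi> i. med3 (x $ i) (y $ i) (z $ i))"

definition is_geom_median :: "(nat \<Rightarrow> real^2) \<Rightarrow> real^2 \<Rightarrow> bool" where
  "is_geom_median g x \<longleftrightarrow>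
     (\<forall>y. (\<Sum>i\<in>{1,2,3}. norm (x - g i)) \<le> (\<Sum>i\<in>{1,2,3}. norm (y - g i)))"

definition krum_score :: "(nat \<Rightarrow> real^2) \<Rightarrow> nat \<Rightarrow> real" where
  "krum_score g i = Min ((\<lambda>j. (norm (g i - g j))\<^sup>2) ` ({1,2,3} - {i}))"

definition is_krum_choice :: "(nat \<Rightarrow> real^2) \<Rightarrow> nat \<Rightarrow> bool" where
  "is_krum_choice g i \<longleftrightarrow> i \<in> {1,2,3} \<and> (\<forall>j\<in>{1,2,3}. krum_score g i \<le> krum_score g j)"

end

theory Submission
  imports Defs
begin

lemma Zexp:
  fixes f :: "bool \<times> bool \<Rightarrow> 'b::{banach, second_countable_topology}"
  shows "measure_pmf.expectation Zpmf f = (1/4) *\<^sub>R (f (True,True) + f (True,False) + f (False,True) + f (False,False))"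
proof -
  have "measure_pmf.expectation Zpmf f = (\<Sum>a\<in>UNIV. pmf Zpmf a *\<^sub>R f a)"
    by (rule integral_measure_pmf) auto
  also have "UNIV = {(True,True),(True,False),(False,True),(False,False)}" by auto
  finally show ?thesis by (simp add: Zpmf_def pmf_pair scaleR_add_right)
qed

lemma uv_comp1: "(a *\<^sub>R uvec + b *\<^sub>R vvec) $ 1 = (b - a) / sqrt 2"
  by (simp add: uvec_def vvec_def field_simps)
lemma uv_comp2: "(a *\<^sub>R uvec + b *\<^sub>R vvec) $ 2 = (a + b) / sqrt 2"
  by (simp add: uvec_def vvec_def field_simps)

lemma uv_norm2: "(norm (a *\<^sub>R uvec + b *\<^sub>R vvec))\<^sup>2 = a\<^sup>2 + b\<^sup>2"
proof -
  have "(norm (a *\<^sub>R uvec + b *\<^sub>R vvec))\<^sup>2 = ((b - a) / sqrt 2)\<^sup>2 + ((a + b) / sqrt 2)\<^sup>2"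
    unfolding power2_norm_eq_inner inner_vec_def sum_2 uv_comp1 uv_comp2 by (simp add: power2_eq_square)
  also have "\<dots> = a\<^sup>2 + b\<^sup>2" by (simp add: power_divide power2_eq_square field_simps)
  finally show ?thesis .
qed

lemma uv_norm: "norm (a *\<^sub>R uvec + b *\<^sub>R vvec) = sqrt (a\<^sup>2 + b\<^sup>2)"
  using uv_norm2 by (metis norm_ge_zero real_sqrt_unique)

lemma uv_diff: "(a *\<^sub>R uvec + b *\<^sub>R vvec) - (c *\<^sub>R uvec + d *\<^sub>R vvec) = (a - c) *\<^sub>R uvec + (b - d) *\<^sub>R vvec"
  by (simp add: algebra_simps)
lemma uv_add: "(a *\<^sub>R uvec + b *\<^sub>R vvec) + (c *\<^sub>R uvec + d *\<^sub>R vvec) = (a + c) *\<^sub>R uvec + (b + d) *\<^sub>R vvec"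
  by (simp add: algebra_simps)
lemma uv_scale: "c *\<^sub>R (a *\<^sub>R uvec + b *\<^sub>R vvec) = (c*a) *\<^sub>R uvec + (c*b) *\<^sub>R vvec"
  by (simp add: algebra_simps)
lemma uv_zero: "0 = 0 *\<^sub>R uvec + 0 *\<^sub>R vvec" by simp

definition sg :: "bool \<Rightarrow> real" where "sg b = 2 * of_bool b - 1"

lemma grad_uv:
  "grad d e 1 z = (d/2) *\<^sub>R uvec + (e * sg (fst z)) *\<^sub>R vvec"
  "grad d e 2 z = (d/2) *\<^sub>R uvec + (e * sg (snd z)) *\<^sub>R vvec"
  "grad d e 3 z = (-d) *\<^sub>R uvec + 0 *\<^sub>R vvec"
  by (simp_all add: grad_def sg_def)

lemma E_vals:
  "measure_pmf.expectation Zpmf (grad d e 1) = (d/2) *\<^sub>R uvec + 0 *\<^sub>R vvec"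
  "measure_pmf.expectation Zpmf (grad d e 2) = (d/2) *\<^sub>R uvec + 0 *\<^sub>R vvec"
  "measure_pmf.expectation Zpmf (grad d e 3) = (-d) *\<^sub>R uvec + 0 *\<^sub>R vvec"
  by (simp_all only: Zexp grad_uv uv_add uv_scale fst_conv snd_conv, simp_all add: sg_def)

lemma sg_sq: "(sg b)\<^sup>2 = 1" by (cases b) (simp_all add: sg_def)
lemma sg_sq2: "sg b * sg b = 1" by (cases b) (simp_all add: sg_def)

lemma med3_div: "med3 (x / sqrt 2) (y / sqrt 2) (z / sqrt 2) = med3 x y z / sqrt 2"
  unfolding med3_def by (simp add: max_divide_distrib_right min_divide_distrib_right)

lemma med_TT: assumes "e > 0" "d > 2*e"
  shows "cw_median3 (grad d e 1 (True,True)) (grad d e 2 (True,True)) (grad d e 3 (True,True)) = (d/2) *\<^sub>R uvec + e *\<^sub>R vvec"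
  using assms unfolding cw_median3_def grad_uv
  by (simp only: vec_eq_iff forall_2 vec_lambda_beta uv_comp1 uv_comp2 fst_conv snd_conv med3_div)
     (simp add: sg_def med3_def max_def min_def)

lemma med_FF: assumes "e > 0" "d > 2*e"
  shows "cw_median3 (grad d e 1 (False,False)) (grad d e 2 (False,False)) (grad d e 3 (False,False)) = (d/2) *\<^sub>R uvec + (-e) *\<^sub>R vvec"
  using assms unfolding cw_median3_def grad_uv
  by (simp only: vec_eq_iff forall_2 vec_lambda_beta uv_comp1 uv_comp2 fst_conv snd_conv med3_div)
     (simp add: sg_def med3_def max_def min_def)

lemma med_TF: assumes "e > 0" "d > 2*e"
  shows "cw_median3 (grad d e 1 (True,False)) (grad d e 2 (True,False)) (grad d e 3 (True,False)) = (d/2 - e) *\<^sub>R uvec + 0 *\<^sub>R vvec"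
  using assms unfolding cw_median3_def grad_uv
  by (simp only: vec_eq_iff forall_2 vec_lambda_beta uv_comp1 uv_comp2 fst_conv snd_conv med3_div)
     (simp add: sg_def med3_def max_def min_def)

lemma med_FT: assumes "e > 0" "d > 2*e"
  shows "cw_median3 (grad d e 1 (False,True)) (grad d e 2 (False,True)) (grad d e 3 (False,True)) = (d/2 - e) *\<^sub>R uvec + 0 *\<^sub>R vvec"
  using assms unfolding cw_median3_def grad_uv
  by (simp only: vec_eq_iff forall_2 vec_lambda_beta uv_comp1 uv_comp2 fst_conv snd_conv med3_div)
     (simp add: sg_def med3_def max_def min_def)

lemma gm_eq:
  assumes "is_geom_median g x" "g 1 = g 2"
  shows "x = g 1"
proof -
  from assms(1) have "(\<Sum>i\<in>{1,2,3}. norm (x - g i)) \<le> (\<Sum>i\<in>{1,2,3}. norm (g 1 - g i))"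
    unfolding is_geom_median_def by blast
  hence c: "norm (x - g 1) + norm (x - g 2) + norm (x - g 3) \<le> norm (g 1 - g 1) + norm (g 1 - g 2) + norm (g 1 - g 3)"
    by (simp add: add.assoc)
  have e: "g 1 - g 3 = (x - g 3) - (x - g 1)" by simp
  have t: "norm (g 1 - g 3) \<le> norm (x - g 3) + norm (x - g 1)"
    unfolding e by (rule norm_triangle_ineq4)
  have z: "norm (g 2 - g 2) = 0" by simp
  from c t z have "norm (x - g 1) \<le> 0" unfolding assms(2) by linarith
  then show ?thesis by simp
qed

lemma gm_ne0:
  assumes "e > 0" "d > 2*e" and g: "g 1 = (d/2) *\<^sub>R uvec + a *\<^sub>R vvec" "g 2 = (d/2) *\<^sub>R uvec + (-a) *\<^sub>R vvec"
    "g 3 = (-d) *\<^sub>R uvec + 0 *\<^sub>R vvec" and a: "a\<^sup>2 = e\<^sup>2" and gm: "is_geom_median g x"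
  shows "x \<noteq> 0"
proof
  assume x0: "x = 0"
  define y where "y = (d/2 - 3*e/4) *\<^sub>R uvec + 0 *\<^sub>R vvec"
  have c: "norm (x - g 1) + norm (x - g 2) + norm (x - g 3) \<le> norm (y - g 1) + norm (y - g 2) + norm (y - g 3)"
  proof -
    from gm have "(\<Sum>i\<in>{1,2,3}. norm (x - g i)) \<le> (\<Sum>i\<in>{1,2,3}. norm (y - g i))" unfolding is_geom_median_def by blast
    thus ?thesis by (simp add: add.assoc)
  qed
  have x0': "x = 0 *\<^sub>R uvec + 0 *\<^sub>R vvec" using x0 by simp
  have "norm (x - g 1) = sqrt ((0 - d/2)\<^sup>2 + (0 - a)\<^sup>2)" by (simp only: x0' g uv_diff uv_norm)
  also have "\<dots> = sqrt (d\<^sup>2/4 + e\<^sup>2)" using a by (simp add: power2_eq_square)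
  finally have n1: "norm (x - g 1) = sqrt (d\<^sup>2/4 + e\<^sup>2)" .
  have "norm (x - g 2) = sqrt ((0 - d/2)\<^sup>2 + (0 - (-a))\<^sup>2)" by (simp only: x0' g uv_diff uv_norm)
  also have "\<dots> = sqrt (d\<^sup>2/4 + e\<^sup>2)" using a by (simp add: power2_eq_square)
  finally have n2: "norm (x - g 2) = sqrt (d\<^sup>2/4 + e\<^sup>2)" .
  have "norm (x - g 3) = sqrt ((0 - (-d))\<^sup>2 + (0 - 0)\<^sup>2)" by (simp only: x0' g uv_diff uv_norm)
  hence n3: "norm (x - g 3) = d" using assms(1,2) by simp
  have "norm (y - g 1) = sqrt ((d/2 - 3*e/4 - d/2)\<^sup>2 + (0 - a)\<^sup>2)" by (simp only: y_def g uv_diff uv_norm)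
  also have "\<dots> = sqrt ((5*e/4)\<^sup>2)" using a by (simp add: power2_eq_square)
  finally have m1: "norm (y - g 1) = 5*e/4" using assms(1) by simp
  have "norm (y - g 2) = sqrt ((d/2 - 3*e/4 - d/2)\<^sup>2 + (0 - (-a))\<^sup>2)" by (simp only: y_def g uv_diff uv_norm)
  also have "\<dots> = sqrt ((5*e/4)\<^sup>2)" using a by (simp add: power2_eq_square)
  finally have m2: "norm (y - g 2) = 5*e/4" using assms(1) by simp
  have "norm (y - g 3) = sqrt ((d/2 - 3*e/4 - (-d))\<^sup>2 + (0 - 0)\<^sup>2)" by (simp only: y_def g uv_diff uv_norm)
  also have "\<dots> = sqrt ((3*d/2 - 3*e/4)\<^sup>2)" by (simp add: algebra_simps)
  finally have m3: "norm (y - g 3) = 3*d/2 - 3*e/4" using assms(1,2) by simp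
  have "(d/2 + 7*e/4)\<^sup>2 < 4 * (d\<^sup>2/4 + e\<^sup>2)"
  proof -
    have "(d - 3*e/2) * (d - 5*e/6) > 0" using assms(1,2) by (intro mult_pos_pos) auto
    moreover have "(d - 3*e/2) * (d - 5*e/6) = d*d - 7*d*e/3 + 5*e*e/4" by (simp add: field_simps)
    moreover have "(d/2 + 7*e/4)\<^sup>2 = d*d/4 + 7*d*e/4 + 49*e*e/16" by (simp add: power2_eq_square algebra_simps)
    moreover have "4 * (d\<^sup>2/4 + e\<^sup>2) = d*d + 4*e*e" by (simp add: power2_eq_square)
    ultimately show ?thesis by linarith
  qed
  hence "d/2 + 7*e/4 < sqrt (4 * (d\<^sup>2/4 + e\<^sup>2))" by (rule real_less_rsqrt)
  moreover have "sqrt (4 * (d\<^sup>2/4 + e\<^sup>2)) = 2 * sqrt (d\<^sup>2/4 + e\<^sup>2)" by (subst real_sqrt_mult) simp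
  ultimately have "d/2 + 7*e/4 < 2 * sqrt (d\<^sup>2/4 + e\<^sup>2)" by simp
  with c n1 n2 n3 m1 m2 m3 show False by linarith
qed


lemma sg_diff: "(e * sg a - e * sg b)\<^sup>2 \<le> 4 * e\<^sup>2"
  by (cases a; cases b) (simp_all add: sg_def power2_eq_square)

lemma krum_score_eq:
  "krum_score g 1 = min ((norm (g 1 - g 2))\<^sup>2) ((norm (g 1 - g 3))\<^sup>2)"
  "krum_score g 2 = min ((norm (g 2 - g 1))\<^sup>2) ((norm (g 2 - g 3))\<^sup>2)"
  "krum_score g 3 = min ((norm (g 3 - g 1))\<^sup>2) ((norm (g 3 - g 2))\<^sup>2)"
proof -
  have "{1,2,3} - {1::nat} = {2,3}" "{1,2,3} - {2::nat} = {1,3}" "{1,2,3} - {3::nat} = {1,2}" by auto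
  thus "krum_score g 1 = min ((norm (g 1 - g 2))\<^sup>2) ((norm (g 1 - g 3))\<^sup>2)"
    "krum_score g 2 = min ((norm (g 2 - g 1))\<^sup>2) ((norm (g 2 - g 3))\<^sup>2)"
    "krum_score g 3 = min ((norm (g 3 - g 1))\<^sup>2) ((norm (g 3 - g 2))\<^sup>2)"
    unfolding krum_score_def by simp_all
qed

theorem mainTheorem13:
  fixes \<delta> \<epsilon> :: real
  assumes "\<epsilon> > 0" and "\<delta> > 2 * \<epsilon>"
  defines "E \<equiv> \<lambda>i. measure_pmf.expectation Zpmf (grad \<delta> \<epsilon> i)"
  defines "Emu \<equiv> (1/3) *\<^sub>R (E 1 + E 2 + E 3)"
  shows "Emu = 0
    \<and> (\<forall>i\<in>{1,2,3}. measure_pmf.expectation Zpmf (\<lambda>z. (norm (grad \<delta> \<epsilon> i z - E i))\<^sup>2) \<le> \<epsilon>\<^sup>2)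
    \<and> (\<forall>i\<in>{1,2,3}. norm (E i - Emu) \<le> \<delta>)
    \<and> measure_pmf.expectation Zpmf
        (\<lambda>z. (norm (cw_median3 (grad \<delta> \<epsilon> 1 z) (grad \<delta> \<epsilon> 2 z) (grad \<delta> \<epsilon> 3 z) - Emu))\<^sup>2)
        > \<delta>\<^sup>2 / 8 + \<epsilon>\<^sup>2 / 2
    \<and> (\<forall>gm. (\<forall>z. is_geom_median (\<lambda>i. grad \<delta> \<epsilon> i z) (gm z)) \<longrightarrow>
         measure_pmf.expectation Zpmf (\<lambda>z. (norm (gm z - Emu))\<^sup>2) > \<delta>\<^sup>2 / 8 + \<epsilon>\<^sup>2 / 2)
    \<and> (\<forall>z k. is_krum_choice (\<lambda>i. grad \<delta> \<epsilon> i z) k \<longrightarrow>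
         (norm (grad \<delta> \<epsilon> k z - Emu))\<^sup>2 = \<epsilon>\<^sup>2 + \<delta>\<^sup>2 / 4)"
proof -
  have E1: "E 1 = (\<delta>/2) *\<^sub>R uvec + 0 *\<^sub>R vvec" unfolding E_def by (rule E_vals)
  have E2: "E 2 = (\<delta>/2) *\<^sub>R uvec + 0 *\<^sub>R vvec" unfolding E_def by (rule E_vals)
  have E3: "E 3 = (-\<delta>) *\<^sub>R uvec + 0 *\<^sub>R vvec" unfolding E_def by (rule E_vals)
  have Emu0: "Emu = 0" unfolding Emu_def E1 E2 E3 uv_add uv_scale by simp
  have Emu': "Emu = 0 *\<^sub>R uvec + 0 *\<^sub>R vvec" using Emu0 by simp
  have v1: "(norm (grad \<delta> \<epsilon> 1 z - E 1))\<^sup>2 = \<epsilon>\<^sup>2" for z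
  proof -
    have "(norm (grad \<delta> \<epsilon> 1 z - E 1))\<^sup>2 = (\<delta>/2 - \<delta>/2)\<^sup>2 + (\<epsilon> * sg (fst z) - 0)\<^sup>2"
      by (simp only: E1 grad_uv uv_diff uv_norm2)
    thus ?thesis by (simp add: power_mult_distrib sg_sq)
  qed
  have v2: "(norm (grad \<delta> \<epsilon> 2 z - E 2))\<^sup>2 = \<epsilon>\<^sup>2" for z
  proof -
    have "(norm (grad \<delta> \<epsilon> 2 z - E 2))\<^sup>2 = (\<delta>/2 - \<delta>/2)\<^sup>2 + (\<epsilon> * sg (snd z) - 0)\<^sup>2"
      by (simp only: E2 grad_uv uv_diff uv_norm2)
    thus ?thesis by (simp add: power_mult_distrib sg_sq)
  qed
  have v3: "(norm (grad \<delta> \<epsilon> 3 z - E 3))\<^sup>2 = 0" for z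
  proof -
    have "(norm (grad \<delta> \<epsilon> 3 z - E 3))\<^sup>2 = (-\<delta> - -\<delta>)\<^sup>2 + (0 - 0)\<^sup>2"
      by (simp only: E3 grad_uv uv_diff uv_norm2)
    thus ?thesis by simp
  qed
  have V1: "measure_pmf.expectation Zpmf (\<lambda>z. (norm (grad \<delta> \<epsilon> 1 z - E 1))\<^sup>2) = \<epsilon>\<^sup>2"
    unfolding Zexp v1 real_scaleR_def by simp
  have V2: "measure_pmf.expectation Zpmf (\<lambda>z. (norm (grad \<delta> \<epsilon> 2 z - E 2))\<^sup>2) = \<epsilon>\<^sup>2"
    unfolding Zexp v2 real_scaleR_def by simp
  have V3: "measure_pmf.expectation Zpmf (\<lambda>z. (norm (grad \<delta> \<epsilon> 3 z - E 3))\<^sup>2) = 0"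
    unfolding Zexp v3 real_scaleR_def by simp
  have var: "\<forall>i\<in>{1,2,3}. measure_pmf.expectation Zpmf (\<lambda>z. (norm (grad \<delta> \<epsilon> i z - E i))\<^sup>2) \<le> \<epsilon>\<^sup>2"
  proof
    fix i :: nat assume "i \<in> {1,2,3}"
    then consider "i = 1" | "i = 2" | "i = 3" by blast
    then show "measure_pmf.expectation Zpmf (\<lambda>z. (norm (grad \<delta> \<epsilon> i z - E i))\<^sup>2) \<le> \<epsilon>\<^sup>2"
      by cases (simp_all only: V1 V2 V3, simp_all)
  qed
  have b1: "norm (E 1 - Emu) = \<delta>/2"
  proof -
    have "norm (E 1 - Emu) = sqrt ((\<delta>/2 - 0)\<^sup>2 + (0 - 0)\<^sup>2)" by (simp only: E1 Emu' uv_diff uv_norm)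
    thus ?thesis using assms(1,2) by simp
  qed
  have b2: "norm (E 2 - Emu) = \<delta>/2"
  proof -
    have "norm (E 2 - Emu) = sqrt ((\<delta>/2 - 0)\<^sup>2 + (0 - 0)\<^sup>2)" by (simp only: E2 Emu' uv_diff uv_norm)
    thus ?thesis using assms(1,2) by simp
  qed
  have b3: "norm (E 3 - Emu) = \<delta>"
  proof -
    have "norm (E 3 - Emu) = sqrt ((-\<delta> - 0)\<^sup>2 + (0 - 0)\<^sup>2)" by (simp only: E3 Emu' uv_diff uv_norm)
    thus ?thesis using assms(1,2) by simp
  qed
  have bias: "\<forall>i\<in>{1,2,3}. norm (E i - Emu) \<le> \<delta>"
  proof
    fix i :: nat assume "i \<in> {1,2,3}"
    then consider "i = 1" | "i = 2" | "i = 3" by blast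
    then show "norm (E i - Emu) \<le> \<delta>"
      by cases (simp_all only: b1 b2 b3, insert assms(1,2), simp_all)
  qed
  have key: "(\<delta> - 2*\<epsilon>)\<^sup>2 > 0" using assms(1,2) by simp
  have cm: "measure_pmf.expectation Zpmf
        (\<lambda>z. (norm (cw_median3 (grad \<delta> \<epsilon> 1 z) (grad \<delta> \<epsilon> 2 z) (grad \<delta> \<epsilon> 3 z) - Emu))\<^sup>2)
        > \<delta>\<^sup>2 / 8 + \<epsilon>\<^sup>2 / 2"
  proof -
    have "measure_pmf.expectation Zpmf
        (\<lambda>z. (norm (cw_median3 (grad \<delta> \<epsilon> 1 z) (grad \<delta> \<epsilon> 2 z) (grad \<delta> \<epsilon> 3 z) - Emu))\<^sup>2)
      = (1/4) * (((\<delta>/2)\<^sup>2 + \<epsilon>\<^sup>2) + (\<delta>/2 - \<epsilon>)\<^sup>2 + (\<delta>/2 - \<epsilon>)\<^sup>2 + ((\<delta>/2)\<^sup>2 + (-\<epsilon>)\<^sup>2))"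
      unfolding Zexp med_TT[OF assms(1,2)] med_TF[OF assms(1,2)] med_FT[OF assms(1,2)] med_FF[OF assms(1,2)] Emu0
      by (simp only: diff_zero uv_norm2 real_scaleR_def) simp
    thus ?thesis using key by (simp add: power2_eq_square algebra_simps)
  qed
  have gmed: "\<forall>gm. (\<forall>z. is_geom_median (\<lambda>i. grad \<delta> \<epsilon> i z) (gm z)) \<longrightarrow>
         measure_pmf.expectation Zpmf (\<lambda>z. (norm (gm z - Emu))\<^sup>2) > \<delta>\<^sup>2 / 8 + \<epsilon>\<^sup>2 / 2"
  proof (intro allI impI)
    fix gm assume H: "\<forall>z. is_geom_median (\<lambda>i. grad \<delta> \<epsilon> i z) (gm z)"
    have gTT: "gm (True,True) = grad \<delta> \<epsilon> 1 (True,True)"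
      using gm_eq[OF H[rule_format, of "(True,True)"]] by (simp add: grad_def)
    have gFF: "gm (False,False) = grad \<delta> \<epsilon> 1 (False,False)"
      using gm_eq[OF H[rule_format, of "(False,False)"]] by (simp add: grad_def)
    have nTT: "(norm (gm (True,True) - Emu))\<^sup>2 = \<delta>\<^sup>2/4 + \<epsilon>\<^sup>2"
    proof -
      have "(norm (gm (True,True) - Emu))\<^sup>2 = (\<delta>/2 - 0)\<^sup>2 + (\<epsilon> * sg True - 0)\<^sup>2"
        by (simp only: gTT Emu' grad_uv uv_diff uv_norm2 fst_conv)
      thus ?thesis by (simp add: sg_def power_divide)
    qed
    have nFF: "(norm (gm (False,False) - Emu))\<^sup>2 = \<delta>\<^sup>2/4 + \<epsilon>\<^sup>2"
    proof -
      have "(norm (gm (False,False) - Emu))\<^sup>2 = (\<delta>/2 - 0)\<^sup>2 + (\<epsilon> * sg False - 0)\<^sup>2"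
        by (simp only: gFF Emu' grad_uv uv_diff uv_norm2 fst_conv)
      thus ?thesis by (simp add: sg_def power_divide)
    qed
    have "gm (True,False) \<noteq> 0"
      by (rule gm_ne0[OF assms(1,2) _ _ _ _ H[rule_format, of "(True,False)"], where a=\<epsilon>])
         (simp_all add: grad_def)
    hence nTF: "(norm (gm (True,False) - Emu))\<^sup>2 > 0" using Emu0 by simp
    have "gm (False,True) \<noteq> 0"
      by (rule gm_ne0[OF assms(1,2) _ _ _ _ H[rule_format, of "(False,True)"], where a="-\<epsilon>"])
         (simp_all add: grad_def)
    hence nFT: "(norm (gm (False,True) - Emu))\<^sup>2 > 0" using Emu0 by simp
    show "measure_pmf.expectation Zpmf (\<lambda>z. (norm (gm z - Emu))\<^sup>2) > \<delta>\<^sup>2 / 8 + \<epsilon>\<^sup>2 / 2"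
      unfolding Zexp real_scaleR_def nTT nFF using nTF nFT by (simp only: distrib_left)
  qed
  have krum: "\<forall>z k. is_krum_choice (\<lambda>i. grad \<delta> \<epsilon> i z) k \<longrightarrow>
         (norm (grad \<delta> \<epsilon> k z - Emu))\<^sup>2 = \<epsilon>\<^sup>2 + \<delta>\<^sup>2 / 4"
  proof (intro allI impI)
    fix z k assume K: "is_krum_choice (\<lambda>i. grad \<delta> \<epsilon> i z) k"
    define g where "g = (\<lambda>i. grad \<delta> \<epsilon> i z)"
    have n12: "(norm (g 1 - g 2))\<^sup>2 \<le> 4 * \<epsilon>\<^sup>2"
    proof -
      have "(norm (g 1 - g 2))\<^sup>2 = (\<delta>/2 - \<delta>/2)\<^sup>2 + (\<epsilon> * sg (fst z) - \<epsilon> * sg (snd z))\<^sup>2"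
        by (simp only: g_def grad_uv uv_diff uv_norm2)
      thus ?thesis using sg_diff by simp
    qed
    have n31: "(norm (g 3 - g 1))\<^sup>2 = 9 * \<delta>\<^sup>2 / 4 + \<epsilon>\<^sup>2"
    proof -
      have "(norm (g 3 - g 1))\<^sup>2 = (-\<delta> - \<delta>/2)\<^sup>2 + (0 - \<epsilon> * sg (fst z))\<^sup>2"
        by (simp only: g_def grad_uv uv_diff uv_norm2)
      thus ?thesis by (simp add: power_mult_distrib sg_sq sg_sq2 power2_eq_square algebra_simps)
    qed
    have n32: "(norm (g 3 - g 2))\<^sup>2 = 9 * \<delta>\<^sup>2 / 4 + \<epsilon>\<^sup>2"
    proof -
      have "(norm (g 3 - g 2))\<^sup>2 = (-\<delta> - \<delta>/2)\<^sup>2 + (0 - \<epsilon> * sg (snd z))\<^sup>2"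
        by (simp only: g_def grad_uv uv_diff uv_norm2)
      thus ?thesis by (simp add: power_mult_distrib sg_sq sg_sq2 power2_eq_square algebra_simps)
    qed
    have big: "4 * \<epsilon>\<^sup>2 < 9 * \<delta>\<^sup>2 / 4 + \<epsilon>\<^sup>2"
    proof -
      have "(2*\<epsilon>)\<^sup>2 < \<delta>\<^sup>2" using assms(1,2) by (intro power_strict_mono) auto
      hence "4 * \<epsilon>\<^sup>2 < \<delta>\<^sup>2" by (simp add: power_mult_distrib)
      thus ?thesis using zero_le_power2[of \<delta>] by linarith
    qed
    have k: "k \<in> {1,2,3}" and kmin: "krum_score g k \<le> krum_score g 1"
      using K unfolding is_krum_choice_def g_def by auto
    have "k \<noteq> 3"
    proof
      assume "k = 3"
      hence "krum_score g 3 \<le> krum_score g 1" using kmin by simp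
      thus False unfolding krum_score_eq n31 n32 using n12 big by linarith
    qed
    with k have "k = 1 \<or> k = 2" by auto
    thus "(norm (grad \<delta> \<epsilon> k z - Emu))\<^sup>2 = \<epsilon>\<^sup>2 + \<delta>\<^sup>2 / 4"
    proof
      assume "k = 1"
      hence "(norm (grad \<delta> \<epsilon> k z - Emu))\<^sup>2 = (\<delta>/2 - 0)\<^sup>2 + (\<epsilon> * sg (fst z) - 0)\<^sup>2"
        by (simp only: Emu' grad_uv uv_diff uv_norm2)
      thus ?thesis by (simp add: power_mult_distrib sg_sq power_divide)
    next
      assume "k = 2"
      hence "(norm (grad \<delta> \<epsilon> k z - Emu))\<^sup>2 = (\<delta>/2 - 0)\<^sup>2 + (\<epsilon> * sg (snd z) - 0)\<^sup>2"
        by (simp only: Emu' grad_uv uv_diff uv_norm2)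
      thus ?thesis by (simp add: power_mult_distrib sg_sq power_divide)
    qed
  qed
  show ?thesis using Emu0 var bias cm gmed krum by (intro conjI) assumption+
qed

end
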